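(* Assume Assumption A, and let $P\in\Pi(\mu,\nu)$ satisfy $H(P|\mu\otimes\nu)<\infty$ and, for $\mu$-a.e. $x$, $\int(y-x)P_x(dy)>0$ if $x\ge0$ and $<0$ if $x<0$. For each $m\in\mathbb{N}$ let $h_m\in L_m(\mathbb{R})$ be a maximizer of $h\mapsto\inf_{\pi\in\Pi(\mu,\nu)}\big(\int h(x)(y-x)\,d\pi+H(\pi|\mu\otimes\nu)\big)$ over $L_m(\mathbb{R})$. Then there exists $m_0\in\mathbb{N}$ such that $$\int|h_m(x)|\,\Big|\int(y-x)P_x(dy)\Big|\,\mu(dx)\le H(P|\mu\otimes\nu)<\infty\qquad\text{for all }m\ge m_0.$$ In particular, $(h_m)_{m\ge m_0}$ is bounded in $L^1(\tilde\mu)$ for the finite measure $\tilde\mu\sim\mu$ given by $\frac{d\tilde\mu}{d\mu}(x)=|\int(y-x)P_x(dy)|$, and $(h_m)_{m\ge1}$ is bounded in $\mu$-probability.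
   Context: Standing setting: $\mu,\nu$ are Borel probability measures on $\mathbb{R}$ with finite first moments, in convex order, centered ($\int x\,\mu(dx)=\int y\,\nu(dy)=0$), and $\mu\neq\delta_0$. $\Pi(\mu,\nu)$: couplings; $P_x$: disintegration kernel w.r.t. the first marginal; $\mathcal{M}(\mu,\nu)$: martingale couplings; $H$: relative entropy. $L_m(\mathbb{R})=\{h:\mathbb{R}\to[-m,m]:\ h\text{ is }m\text{-Lipschitz and }xh(x)\le0\ \forall x\}$. Assumption A: there exists $\bar\pi\in\mathcal{M}(\mu,\nu)$ equivalent to $\mu\otimes\nu$ with $H(\bar\pi|\mu\otimes\nu)<\infty$. *)

theory Defs
  imports "HOL-Probability.Probability"
begin

definition first_moment :: "real measure \<Rightarrow> bool" where
  "first_moment M \<longleftrightarrow> integrable M (\<lambda>x. x)"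

definition convex_order :: "real measure \<Rightarrow> real measure \<Rightarrow> bool" where
  "convex_order \<mu> \<nu> \<longleftrightarrow>
     (\<forall>f. convex_on UNIV f \<longrightarrow> integrable \<nu> f \<longrightarrow>
          integrable \<mu> f \<and> (\<integral>x. f x \<partial>\<mu>) \<le> (\<integral>y. f y \<partial>\<nu>))"

definition couplings :: "real measure \<Rightarrow> real measure \<Rightarrow> (real \<times> real) measure set" where
  "couplings \<mu> \<nu> = {\<pi>. prob_space \<pi> \<and> sets \<pi> = sets (borel \<Otimes>\<^sub>M borel) \<and>
       distr \<pi> borel fst = \<mu> \<and> distr \<pi> borel snd = \<nu>}"

text \<open>K is a disintegration kernel of pi w.r.t. its first marginal mu:
  pi(dx,dy) = mu(dx) K x (dy).\<close>
definition disintegration :: "(real \<times> real) measure \<Rightarrow> real measure \<Rightarrow> (real \<Rightarrow> real measure) \<Rightarrow> bool" where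
  "disintegration \<pi> \<mu> K \<longleftrightarrow>
     K \<in> measurable \<mu> (prob_algebra borel) \<and>
     \<pi> = \<mu> \<bind> (\<lambda>x. distr (K x) (borel \<Otimes>\<^sub>M borel) (\<lambda>y. (x, y)))"

definition martingale_couplings :: "real measure \<Rightarrow> real measure \<Rightarrow> (real \<times> real) measure set" where
  "martingale_couplings \<mu> \<nu> = {\<pi>. \<pi> \<in> couplings \<mu> \<nu> \<and>
       (\<exists>K. disintegration \<pi> \<mu> K \<and>
            (AE x in \<mu>. integrable (K x) (\<lambda>y. y) \<and> (\<integral>y. y \<partial>K x) = x))}"

definition relent :: "'a measure \<Rightarrow> 'a measure \<Rightarrow> ereal" where
  "relent P Q =
     (if sets P = sets Q \<and> absolutely_continuous Q P then
        (let f = (\<lambda>z. enn2real (RN_deriv Q P z)) in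
          if integrable Q (\<lambda>z. f z * ln (f z)) then ereal (\<integral>z. f z * ln (f z) \<partial>Q) else \<infinity>)
      else \<infinity>)"

definition Lm :: "nat \<Rightarrow> (real \<Rightarrow> real) set" where
  "Lm m = {h. (\<forall>x. \<bar>h x\<bar> \<le> real m) \<and> (real m)-lipschitz_on UNIV h \<and> (\<forall>x. x * h x \<le> 0)}"

definition dual_obj :: "real measure \<Rightarrow> real measure \<Rightarrow> (real \<Rightarrow> real) \<Rightarrow> ereal" where
  "dual_obj \<mu> \<nu> h = (INF \<pi>\<in>couplings \<mu> \<nu>.
      ereal (\<integral>z. h (fst z) * (snd z - fst z) \<partial>\<pi>) + relent \<pi> (\<mu> \<Otimes>\<^sub>M \<nu>))"

end

theory Submission
  imports Defs
begin


lemma xlnx_ge: "(x::real) \<ge> 0 \<Longrightarrow> x - 1 \<le> x * ln x"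
proof (cases "x = 0")
  case False
  assume x: "x \<ge> 0"
  with False have xp: "x > 0" by simp
  have "ln (1/x) \<le> 1/x - 1" using xp by (intro ln_le_minus_one) simp
  hence "- ln x \<le> 1/x - 1" using xp by (simp add: ln_div)
  hence A: "x * (- ln x) \<le> x * (1/x - 1)" by (rule mult_left_mono) (use xp in simp)
  have B: "x * (1/x - 1) = 1 - x" using xp by (simp add: field_simps)
  from A B show ?thesis by linarith
qed simp

lemma relent_nonneg:
  assumes P: "prob_space P" and Q: "prob_space Q"
  shows "relent P Q \<ge> 0"
proof -
  interpret Q: prob_space Q by fact
  interpret P: prob_space P by fact
  show ?thesis
  proof (cases "sets P = sets Q \<and> absolutely_continuous Q P")
    case False thus ?thesis unfolding relent_def by auto
  next
    case True
    define f where "f = (\<lambda>z. enn2real (RN_deriv Q P z))"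
    have ac: "absolutely_continuous Q P" and sP: "sets P = sets Q" using True by auto
    have "(\<integral>\<^sup>+x. RN_deriv Q P x \<partial>Q) = (\<integral>\<^sup>+x. RN_deriv Q P x * 1 \<partial>Q)" by simp
    also have "\<dots> = (\<integral>\<^sup>+x. 1 \<partial>P)"
      using Q.RN_deriv_nn_integral[OF ac sP, of "\<lambda>_. 1"] by simp
    also have "\<dots> = 1" using P.emeasure_space_1 by simp
    finally have I1: "(\<integral>\<^sup>+x. RN_deriv Q P x \<partial>Q) = 1" .
    have fin: "AE x in Q. RN_deriv Q P x \<noteq> \<infinity>"
      using I1 by (intro nn_integral_PInf_AE) auto
    have I2: "(\<integral>\<^sup>+x. ennreal (f x) \<partial>Q) = 1"
      unfolding I1[symmetric] f_def
      by (rule nn_integral_cong_AE) (use fin in \<open>auto simp: ennreal_enn2real_if\<close>)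
    have fm: "f \<in> borel_measurable Q" unfolding f_def by measurable
    have intf: "integrable Q f"
      using I2 fm by (intro integrableI_nonneg) (auto simp: f_def)
    have intf1: "(\<integral>x. f x \<partial>Q) = 1"
      using I2 fm by (subst integral_eq_nn_integral) (auto simp: f_def)
    show ?thesis
    proof (cases "integrable Q (\<lambda>z. f z * ln (f z))")
      case False thus ?thesis using True by (simp add: relent_def f_def Let_def)
    next
      case True2: True
      have "0 = (\<integral>x. f x - 1 \<partial>Q)"
        using intf intf1 by (simp add: Q.prob_space)
      also have "\<dots> \<le> (\<integral>x. f x * ln (f x) \<partial>Q)"
        using intf True2 by (intro integral_mono) (auto simp: f_def intro!: xlnx_ge)
      finally show ?thesis using True True2 by (simp add: relent_def f_def Let_def)
    qed
  qed
qed


lemma integral_bind_L1: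
  fixes g :: "'b \<Rightarrow> real"
  assumes g[measurable]: "g \<in> borel_measurable B"
    and N[measurable]: "N \<in> measurable M (subprob_algebra B)"
    and int: "integrable (M \<bind> N) g"
  shows "integrable M (\<lambda>x. \<integral>y. g y \<partial>N x)"
    and "(\<integral>z. g z \<partial>(M \<bind> N)) = (\<integral>x. \<integral>y. g y \<partial>N x \<partial>M)"
proof -
  define Fp where "Fp x = (\<integral>\<^sup>+y. ennreal (g y) \<partial>N x)" for x
  define Fn where "Fn x = (\<integral>\<^sup>+y. ennreal (- g y) \<partial>N x)" for x
  have mFp[measurable]: "Fp \<in> borel_measurable M" unfolding Fp_def
    by (rule measurable_compose[OF N nn_integral_measurable_subprob_algebra]) measurable
  have mFn[measurable]: "Fn \<in> borel_measurable M" unfolding Fn_def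
    by (rule measurable_compose[OF N nn_integral_measurable_subprob_algebra]) measurable
  have mI[measurable]: "(\<lambda>x. \<integral>y. g y \<partial>N x) \<in> borel_measurable M"
    by (rule measurable_compose[OF N integral_measurable_subprob_algebra]) measurable
  have eP: "(\<integral>\<^sup>+z. ennreal (g z) \<partial>(M \<bind> N)) = (\<integral>\<^sup>+x. Fp x \<partial>M)"
    unfolding Fp_def by (rule nn_integral_bind) (auto intro: N)
  have eN: "(\<integral>\<^sup>+z. ennreal (- g z) \<partial>(M \<bind> N)) = (\<integral>\<^sup>+x. Fn x \<partial>M)"
    unfolding Fn_def by (rule nn_integral_bind) (auto intro: N)
  have fP: "(\<integral>\<^sup>+x. Fp x \<partial>M) \<noteq> \<infinity>" using int eP by (simp add: real_integrable_def)
  have fN: "(\<integral>\<^sup>+x. Fn x \<partial>M) \<noteq> \<infinity>" using int eN by (simp add: real_integrable_def)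
  have aP: "AE x in M. Fp x \<noteq> \<infinity>" by (rule nn_integral_PInf_AE[OF mFp fP])
  have aN: "AE x in M. Fn x \<noteq> \<infinity>" by (rule nn_integral_PInf_AE[OF mFn fN])
  have ae: "AE x in M. (\<integral>y. g y \<partial>N x) = enn2real (Fp x) - enn2real (Fn x)"
    using aP aN AE_space
  proof eventually_elim
    case (elim x)
    have sx: "sets (N x) = sets B" using sets_kernel[OF N elim(3)] .
    have gm: "g \<in> borel_measurable (N x)" using g measurable_cong_sets[OF sx refl] by blast
    have "integrable (N x) g" using elim gm unfolding real_integrable_def Fp_def Fn_def by simp
    thus ?case by (simp add: real_lebesgue_integral_def Fp_def Fn_def)
  qed
  have iP: "integrable M (\<lambda>x. enn2real (Fp x))"
  proof (rule integrableI_nonneg)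
    have "(\<integral>\<^sup>+x. ennreal (enn2real (Fp x)) \<partial>M) = (\<integral>\<^sup>+x. Fp x \<partial>M)"
      by (rule nn_integral_cong_AE) (use aP in \<open>auto simp: ennreal_enn2real_if\<close>)
    thus "(\<integral>\<^sup>+x. ennreal (enn2real (Fp x)) \<partial>M) < \<infinity>" using fP by (simp add: less_top)
  qed auto
  have iN: "integrable M (\<lambda>x. enn2real (Fn x))"
  proof (rule integrableI_nonneg)
    have "(\<integral>\<^sup>+x. ennreal (enn2real (Fn x)) \<partial>M) = (\<integral>\<^sup>+x. Fn x \<partial>M)"
      by (rule nn_integral_cong_AE) (use aN in \<open>auto simp: ennreal_enn2real_if\<close>)
    thus "(\<integral>\<^sup>+x. ennreal (enn2real (Fn x)) \<partial>M) < \<infinity>" using fN by (simp add: less_top)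
  qed auto
  have vP: "(\<integral>x. enn2real (Fp x) \<partial>M) = enn2real (\<integral>\<^sup>+x. Fp x \<partial>M)"
  proof -
    have "(\<integral>x. enn2real (Fp x) \<partial>M) = enn2real (\<integral>\<^sup>+x. ennreal (enn2real (Fp x)) \<partial>M)"
      by (rule integral_eq_nn_integral) auto
    also have "(\<integral>\<^sup>+x. ennreal (enn2real (Fp x)) \<partial>M) = (\<integral>\<^sup>+x. Fp x \<partial>M)"
      by (rule nn_integral_cong_AE) (use aP in \<open>auto simp: ennreal_enn2real_if\<close>)
    finally show ?thesis .
  qed
  have vN: "(\<integral>x. enn2real (Fn x) \<partial>M) = enn2real (\<integral>\<^sup>+x. Fn x \<partial>M)"
  proof -
    have "(\<integral>x. enn2real (Fn x) \<partial>M) = enn2real (\<integral>\<^sup>+x. ennreal (enn2real (Fn x)) \<partial>M)"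
      by (rule integral_eq_nn_integral) auto
    also have "(\<integral>\<^sup>+x. ennreal (enn2real (Fn x)) \<partial>M) = (\<integral>\<^sup>+x. Fn x \<partial>M)"
      by (rule nn_integral_cong_AE) (use aN in \<open>auto simp: ennreal_enn2real_if\<close>)
    finally show ?thesis .
  qed
  have iD: "integrable M (\<lambda>x. enn2real (Fp x) - enn2real (Fn x))" using iP iN by auto
  show "integrable M (\<lambda>x. \<integral>y. g y \<partial>N x)"
    using iD by (subst integrable_cong_AE[OF mI _ ae]) auto
  have "(\<integral>x. \<integral>y. g y \<partial>N x \<partial>M) = (\<integral>x. enn2real (Fp x) - enn2real (Fn x) \<partial>M)"
    by (rule integral_cong_AE[OF mI _ ae]) auto
  also have "\<dots> = enn2real (\<integral>\<^sup>+x. Fp x \<partial>M) - enn2real (\<integral>\<^sup>+x. Fn x \<partial>M)"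
    using iP iN vP vN by simp
  also have "\<dots> = (\<integral>z. g z \<partial>(M \<bind> N))"
    using real_lebesgue_integral_def[OF int] eP eN by simp
  finally show "(\<integral>z. g z \<partial>(M \<bind> N)) = (\<integral>x. \<integral>y. g y \<partial>N x \<partial>M)" by simp
qed


lemma disint_fubini:
  fixes g :: "real \<times> real \<Rightarrow> real"
  assumes mu_sets: "sets \<mu> = sets borel" and dis: "disintegration P \<mu> K"
    and g[measurable]: "g \<in> borel_measurable (borel \<Otimes>\<^sub>M borel)"
    and int: "integrable P g"
  shows "integrable \<mu> (\<lambda>x. \<integral>y. g (x, y) \<partial>K x)"
    and "(\<integral>z. g z \<partial>P) = (\<integral>x. \<integral>y. g (x, y) \<partial>K x \<partial>\<mu>)"
proof -
  have Km: "K \<in> measurable \<mu> (prob_algebra borel)" and Peq: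
    "P = \<mu> \<bind> (\<lambda>x. distr (K x) (borel \<Otimes>\<^sub>M borel) (\<lambda>y. (x, y)))"
    using dis by (auto simp: disintegration_def)
  have Ks: "K \<in> measurable \<mu> (subprob_algebra borel)" using Km by (rule measurable_prob_algebraD)
  have pm: "(\<lambda>(x, y). (x, y)) \<in> (\<mu> \<Otimes>\<^sub>M borel) \<rightarrow>\<^sub>M (borel \<Otimes>\<^sub>M borel :: (real \<times> real) measure)"
  proof -
    have "sets (\<mu> \<Otimes>\<^sub>M (borel::real measure)) = sets (borel \<Otimes>\<^sub>M (borel::real measure))"
      by (rule sets_pair_measure_cong[OF mu_sets refl])
    hence "(\<lambda>x. x) \<in> (\<mu> \<Otimes>\<^sub>M borel) \<rightarrow>\<^sub>M (borel \<Otimes>\<^sub>M borel :: (real \<times> real) measure)"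
      by (rule measurable_ident_sets)
    thus ?thesis by (simp add: case_prod_beta)
  qed
  have N: "(\<lambda>x. distr (K x) (borel \<Otimes>\<^sub>M borel) (\<lambda>y. (x, y))) \<in> measurable \<mu> (subprob_algebra (borel \<Otimes>\<^sub>M borel))"
    using measurable_distr2[OF pm Ks] by simp
  have intb: "integrable (\<mu> \<bind> (\<lambda>x. distr (K x) (borel \<Otimes>\<^sub>M borel) (\<lambda>y. (x, y)))) g"
    using int Peq by simp
  have inner: "(\<integral>z. g z \<partial>distr (K x) (borel \<Otimes>\<^sub>M borel) (\<lambda>y. (x, y))) = (\<integral>y. g (x, y) \<partial>K x)"
    if x: "x \<in> space \<mu>" for x
  proof -
    have "K x \<in> space (prob_algebra borel)" using measurable_space[OF Km x] .
    hence sK: "sets (K x) = sets borel" by (simp add: space_prob_algebra)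
    have "(\<lambda>y. (x, y)) \<in> (borel::real measure) \<rightarrow>\<^sub>M (borel \<Otimes>\<^sub>M borel :: (real \<times> real) measure)"
      by measurable
    hence "(\<lambda>y. (x, y)) \<in> K x \<rightarrow>\<^sub>M (borel \<Otimes>\<^sub>M borel :: (real \<times> real) measure)"
      using measurable_cong_sets[OF sK refl] by blast
    thus ?thesis by (rule integral_distr) simp
  qed
  note r = integral_bind_L1[OF g N intb]
  show "integrable \<mu> (\<lambda>x. \<integral>y. g (x, y) \<partial>K x)"
    using r(1) by (rule Bochner_Integration.integrable_cong[THEN iffD1, rotated 2]) (auto simp: inner)
  show "(\<integral>z. g z \<partial>P) = (\<integral>x. \<integral>y. g (x, y) \<partial>K x \<partial>\<mu>)"
    using r(2) Peq by (auto simp: inner intro!: Bochner_Integration.integral_cong)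
qed

lemma Lm_facts:
  assumes "h \<in> Lm m"
  shows "h \<in> borel_measurable borel" "\<And>x. \<bar>h x\<bar> \<le> real m"
    "\<And>x. x > 0 \<Longrightarrow> h x \<le> 0" "\<And>x. x < 0 \<Longrightarrow> h x \<ge> 0" "h 0 = 0"
proof -
  have b: "\<And>x. \<bar>h x\<bar> \<le> real m" and L: "(real m)-lipschitz_on UNIV h"
    and s: "\<And>x. x * h x \<le> 0" using assms by (auto simp: Lm_def)
  show "h \<in> borel_measurable borel"
    by (rule borel_measurable_continuous_onI[OF lipschitz_on_continuous_on[OF L]])
  show "\<And>x. \<bar>h x\<bar> \<le> real m" by (rule b)
  show pos: "\<And>x. x > 0 \<Longrightarrow> h x \<le> 0"
    using s by (metis mult_le_0_iff not_less)
  show neg: "\<And>x. x < 0 \<Longrightarrow> h x \<ge> 0"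
    using s by (metis mult_le_0_iff not_less)
  have d: "\<bar>h 0 - h t\<bar> \<le> real m * \<bar>t\<bar>" for t
    using lipschitz_onD[OF L, of 0 t] by (simp add: dist_real_def)
  show "h 0 = 0"
  proof (rule ccontr)
    assume nz: "h 0 \<noteq> 0"
    define t where "t = \<bar>h 0\<bar> / (2 * (real m + 1))"
    have tp: "t > 0" using nz by (simp add: t_def)
    have mt: "real m * t < \<bar>h 0\<bar>"
    proof -
      have "real m * t = \<bar>h 0\<bar> * (real m / (2 * (real m + 1)))" by (simp add: t_def)
      also have "\<dots> < \<bar>h 0\<bar> * 1" using nz by (intro mult_strict_left_mono) auto
      finally show ?thesis by simp
    qed
    show False
    proof (cases "h 0 > 0")
      case True
      have "h t \<le> 0" using pos tp by simp
      with d[of t] tp mt True show False by auto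
    next
      case False
      have "h (-t) \<ge> 0" using neg tp by simp
      with d[of "-t"] tp mt False nz show False by auto
    qed
  qed
qed

theorem mainTheorem8:
  fixes \<mu> \<nu> :: "real measure" and P :: "(real \<times> real) measure"
    and K :: "real \<Rightarrow> real measure" and h :: "nat \<Rightarrow> real \<Rightarrow> real"
  assumes mu_prob: "prob_space \<mu>" and mu_sets: "sets \<mu> = sets borel"
    and nu_prob: "prob_space \<nu>" and nu_sets: "sets \<nu> = sets borel"
    and mom_mu: "first_moment \<mu>" and mom_nu: "first_moment \<nu>"
    and cx: "convex_order \<mu> \<nu>"
    and cent_mu: "(\<integral>x. x \<partial>\<mu>) = 0" and cent_nu: "(\<integral>y. y \<partial>\<nu>) = 0"
    and not_dirac: "\<mu> \<noteq> return borel 0"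
    and assumptionA: "\<exists>\<pi>. \<pi> \<in> martingale_couplings \<mu> \<nu> \<and>
        absolutely_continuous (\<mu> \<Otimes>\<^sub>M \<nu>) \<pi> \<and> absolutely_continuous \<pi> (\<mu> \<Otimes>\<^sub>M \<nu>) \<and>
        relent \<pi> (\<mu> \<Otimes>\<^sub>M \<nu>) < \<infinity>"
    and P_coupling: "P \<in> couplings \<mu> \<nu>"
    and P_ent: "relent P (\<mu> \<Otimes>\<^sub>M \<nu>) < \<infinity>"
    and K_dis: "disintegration P \<mu> K"
    and drift: "AE x in \<mu>. (x \<ge> 0 \<longrightarrow> (\<integral>y. (y - x) \<partial>K x) > 0) \<and>
                            (x < 0 \<longrightarrow> (\<integral>y. (y - x) \<partial>K x) < 0)"
    and h_max: "\<And>m. m \<ge> 1 \<Longrightarrow> h m \<in> Lm m \<and> (\<forall>g\<in>Lm m. dual_obj \<mu> \<nu> g \<le> dual_obj \<mu> \<nu> (h m))"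
  shows "\<exists>m0\<ge>1.
      (\<forall>m\<ge>m0. enn2ereal (\<integral>\<^sup>+x. ennreal (\<bar>h m x\<bar> * \<bar>\<integral>y. (y - x) \<partial>K x\<bar>) \<partial>\<mu>)
                 \<le> relent P (\<mu> \<Otimes>\<^sub>M \<nu>))
    \<and> (let \<mu>' = density \<mu> (\<lambda>x. ennreal \<bar>\<integral>y. (y - x) \<partial>K x\<bar>) in
         finite_measure \<mu>' \<and> absolutely_continuous \<mu> \<mu>' \<and> absolutely_continuous \<mu>' \<mu> \<and>
         (\<exists>C. \<forall>m\<ge>m0. (\<integral>\<^sup>+x. ennreal \<bar>h m x\<bar> \<partial>\<mu>') \<le> ennreal C))
    \<and> (\<forall>\<epsilon>>0. \<exists>R. \<forall>m\<ge>1. measure \<mu> {x. \<bar>h m x\<bar> > R} \<le> \<epsilon>)"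
proof -
  interpret mu: prob_space \<mu> by (rule mu_prob)
  have sp_mu: "space \<mu> = UNIV" using sets_eq_imp_space_eq[OF mu_sets] by simp
  have Pprob: "prob_space P" and Psets: "sets P = sets (borel \<Otimes>\<^sub>M borel)"
    and Pfst: "distr P borel fst = \<mu>" and Psnd: "distr P borel snd = \<nu>"
    using P_coupling by (auto simp: couplings_def)
  interpret PP: prob_space P by (rule Pprob)
  have fstm: "fst \<in> P \<rightarrow>\<^sub>M (borel :: real measure)"
    using measurable_cong_sets[OF Psets refl] by (metis measurable_fst)
  have sndm: "snd \<in> P \<rightarrow>\<^sub>M (borel :: real measure)"
    using measurable_cong_sets[OF Psets refl] by (metis measurable_snd)
  have int_fst: "integrable P (\<lambda>z. fst z)"
  proof -
    have "integrable (distr P borel fst) (\<lambda>x::real. x)" using mom_mu Pfst by (simp add: first_moment_def)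
    thus ?thesis using integrable_distr_eq[OF fstm, of "\<lambda>x. x"] by simp
  qed
  have int_snd: "integrable P (\<lambda>z. snd z)"
  proof -
    have "integrable (distr P borel snd) (\<lambda>x::real. x)" using mom_nu Psnd by (simp add: first_moment_def)
    thus ?thesis using integrable_distr_eq[OF sndm, of "\<lambda>x. x"] by simp
  qed
  have int_d: "integrable P (\<lambda>z. snd z - fst z)" using int_fst int_snd by auto
  define D where "D x = (\<integral>y. (y - x) \<partial>K x)" for x
  have D_int: "integrable \<mu> D"
    using disint_fubini(1)[OF mu_sets K_dis _ int_d] unfolding D_def by simp
  have D_meas[measurable]: "D \<in> borel_measurable borel"
    using borel_measurable_integrable[OF D_int] measurable_cong_sets[OF mu_sets refl] by blast
  have pq: "prob_space (\<mu> \<Otimes>\<^sub>M \<nu>)"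
    by (rule prob_space_pair) (auto intro: mu_prob nu_prob)
  have Pnn: "relent P (\<mu> \<Otimes>\<^sub>M \<nu>) \<ge> 0" by (rule relent_nonneg[OF Pprob pq])
  obtain r where r: "relent P (\<mu> \<Otimes>\<^sub>M \<nu>) = ereal r"
    using P_ent Pnn by (cases "relent P (\<mu> \<Otimes>\<^sub>M \<nu>)") auto
  have r0: "r \<ge> 0" using Pnn r by simp
  have dual0: "dual_obj \<mu> \<nu> (\<lambda>_. 0) \<ge> 0"
    unfolding dual_obj_def
  proof (rule INF_greatest)
    fix \<pi> assume "\<pi> \<in> couplings \<mu> \<nu>"
    hence "prob_space \<pi>" by (simp add: couplings_def)
    hence "relent \<pi> (\<mu> \<Otimes>\<^sub>M \<nu>) \<ge> 0" by (rule relent_nonneg[OF _ pq])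
    thus "0 \<le> ereal (\<integral>z. 0 * (snd z - fst z) \<partial>\<pi>) + relent \<pi> (\<mu> \<Otimes>\<^sub>M \<nu>)" by simp
  qed
  have bound: "(\<integral>\<^sup>+x. ennreal (\<bar>h m x\<bar> * \<bar>D x\<bar>) \<partial>\<mu>) \<le> ennreal r" if m: "m \<ge> 1" for m
  proof -
    have hm: "h m \<in> Lm m" and hmax: "\<forall>g\<in>Lm m. dual_obj \<mu> \<nu> g \<le> dual_obj \<mu> \<nu> (h m)"
      using h_max[OF m] by auto
    note hf = Lm_facts[OF hm]
    have hmeas[measurable]: "h m \<in> borel_measurable borel" by (rule hf(1))
    have z: "(\<lambda>_. 0) \<in> Lm m"
      unfolding Lm_def using lipschitz_on_le[OF lipschitz_on_constant, of "real m" UNIV 0] by auto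
    define g where "g z = h m (fst z) * (snd z - fst z)" for z
    have gm[measurable]: "g \<in> borel_measurable (borel \<Otimes>\<^sub>M borel)" unfolding g_def by measurable
    have gmP: "g \<in> borel_measurable P" using gm measurable_cong_sets[OF Psets refl] by blast
    have gint: "integrable P g"
    proof (rule Bochner_Integration.integrable_bound[of _ "\<lambda>z. real m * (snd z - fst z)"])
      show "integrable P (\<lambda>z. real m * (snd z - fst z))" using int_d by simp
      show "g \<in> borel_measurable P" by (rule gmP)
      show "AE z in P. norm (g z) \<le> norm (real m * (snd z - fst z))"
        by (intro AE_I2) (auto simp: g_def abs_mult intro!: mult_right_mono hf(2))
    qed
    have "0 \<le> dual_obj \<mu> \<nu> (h m)" using dual0 hmax z by (meson order_trans)
    also have "\<dots> \<le> ereal (\<integral>z. g z \<partial>P) + relent P (\<mu> \<Otimes>\<^sub>M \<nu>)"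
      unfolding dual_obj_def g_def by (rule INF_lower2[OF P_coupling]) simp
    finally have ineq: "0 \<le> (\<integral>z. g z \<partial>P) + r" using r by simp
    note F = disint_fubini[OF mu_sets K_dis gm gint]
    have inner: "(\<integral>y. g (x, y) \<partial>K x) = h m x * D x" for x
      by (simp add: g_def D_def)
    have hDint: "integrable \<mu> (\<lambda>x. h m x * D x)" using F(1) by (simp add: inner)
    have Ieq: "(\<integral>z. g z \<partial>P) = (\<integral>x. h m x * D x \<partial>\<mu>)" using F(2) by (simp add: inner)
    have sign: "AE x in \<mu>. \<bar>h m x\<bar> * \<bar>D x\<bar> = - (h m x * D x)"
      using drift
    proof eventually_elim
      case (elim x)
      show ?case
      proof (cases "x > 0")
        case True
        hence "D x > 0" "h m x \<le> 0" using elim hf(3) by (auto simp: D_def)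
        thus ?thesis by (simp add: abs_mult)
      next
        case False
        show ?thesis
        proof (cases "x = 0")
          case True thus ?thesis using hf(5) by simp
        next
          case False2: False
          hence "x < 0" using False by simp
          hence "D x < 0" "h m x \<ge> 0" using elim hf(4) by (auto simp: D_def)
          thus ?thesis by (simp add: abs_mult)
        qed
      qed
    qed
    have "(\<integral>\<^sup>+x. ennreal (\<bar>h m x\<bar> * \<bar>D x\<bar>) \<partial>\<mu>) = (\<integral>\<^sup>+x. ennreal (- (h m x * D x)) \<partial>\<mu>)"
      by (rule nn_integral_cong_AE) (use sign in auto)
    also have "\<dots> = ennreal (\<integral>x. - (h m x * D x) \<partial>\<mu>)"
    proof (rule nn_integral_eq_integral)
      show "integrable \<mu> (\<lambda>x. - (h m x * D x))" using hDint by simp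
      show "AE x in \<mu>. 0 \<le> - (h m x * D x)" using sign by eventually_elim (metis abs_ge_zero zero_le_mult_iff)
    qed
    also have "\<dots> \<le> ennreal r" using ineq Ieq by (intro ennreal_leI) simp
    finally show ?thesis .
  qed
  have part1: "\<forall>m\<ge>1. enn2ereal (\<integral>\<^sup>+x. ennreal (\<bar>h m x\<bar> * \<bar>\<integral>y. (y - x) \<partial>K x\<bar>) \<partial>\<mu>)
                 \<le> relent P (\<mu> \<Otimes>\<^sub>M \<nu>)"
  proof (intro allI impI)
    fix m :: nat assume m: "m \<ge> 1"
    have "enn2ereal (\<integral>\<^sup>+x. ennreal (\<bar>h m x\<bar> * \<bar>D x\<bar>) \<partial>\<mu>) \<le> enn2ereal (ennreal r)"
      using bound[OF m] less_eq_ennreal.rep_eq by blast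
    thus "enn2ereal (\<integral>\<^sup>+x. ennreal (\<bar>h m x\<bar> * \<bar>\<integral>y. (y - x) \<partial>K x\<bar>) \<partial>\<mu>) \<le> relent P (\<mu> \<Otimes>\<^sub>M \<nu>)"
      using r r0 by (simp add: D_def)
  qed
  have part2: "let \<mu>' = density \<mu> (\<lambda>x. ennreal \<bar>\<integral>y. (y - x) \<partial>K x\<bar>) in
         finite_measure \<mu>' \<and> absolutely_continuous \<mu> \<mu>' \<and> absolutely_continuous \<mu>' \<mu> \<and>
         (\<exists>C. \<forall>m\<ge>1. (\<integral>\<^sup>+x. ennreal \<bar>h m x\<bar> \<partial>\<mu>') \<le> ennreal C)"
    unfolding D_def[symmetric] Let_def
  proof (intro conjI)
    have Dm: "(\<lambda>x. ennreal \<bar>D x\<bar>) \<in> borel_measurable \<mu>"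
      using measurable_cong_sets[OF mu_sets refl] by (metis D_meas borel_measurable_abs measurable_compose_rev measurable_ennreal)
    have "emeasure (density \<mu> (\<lambda>x. ennreal \<bar>D x\<bar>)) (space (density \<mu> (\<lambda>x. ennreal \<bar>D x\<bar>)))
        = (\<integral>\<^sup>+x. ennreal \<bar>D x\<bar> \<partial>\<mu>)"
      using Dm by (simp add: emeasure_density nn_integral_set_ennreal[symmetric])
    also have "\<dots> = ennreal (\<integral>x. \<bar>D x\<bar> \<partial>\<mu>)"
      using D_int by (intro nn_integral_eq_integral) auto
    finally show "finite_measure (density \<mu> (\<lambda>x. ennreal \<bar>D x\<bar>))"
      by (intro finite_measureI) simp
    show "absolutely_continuous \<mu> (density \<mu> (\<lambda>x. ennreal \<bar>D x\<bar>))"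
      unfolding absolutely_continuous_def
    proof
      fix A assume A: "A \<in> null_sets \<mu>"
      show "A \<in> null_sets (density \<mu> (\<lambda>x. ennreal \<bar>D x\<bar>))"
        unfolding null_sets_density_iff[OF Dm] using A AE_not_in[OF A] by auto
    qed
    show "absolutely_continuous (density \<mu> (\<lambda>x. ennreal \<bar>D x\<bar>)) \<mu>"
      unfolding absolutely_continuous_def
    proof
      fix A assume A: "A \<in> null_sets (density \<mu> (\<lambda>x. ennreal \<bar>D x\<bar>))"
      hence As: "A \<in> sets \<mu>" and ae: "AE x\<in>A in \<mu>. ennreal \<bar>D x\<bar> = 0"
        unfolding null_sets_density_iff[OF Dm] by auto
      have "AE x in \<mu>. x \<notin> A" using ae drift
        by eventually_elim (auto simp: D_def split: if_splits; smt (verit, del_insts))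
      thus "A \<in> null_sets \<mu>" using AE_iff_null_sets[OF As] by simp
    qed
    show "\<exists>C. \<forall>m\<ge>1. (\<integral>\<^sup>+x. ennreal \<bar>h m x\<bar> \<partial>density \<mu> (\<lambda>x. ennreal \<bar>D x\<bar>)) \<le> ennreal C"
    proof (intro exI[of _ r] allI impI)
      fix m :: nat assume m: "m \<ge> 1"
      have hm: "h m \<in> borel_measurable borel" using Lm_facts(1) h_max[OF m] by blast
      have hmu: "(\<lambda>x. ennreal \<bar>h m x\<bar>) \<in> borel_measurable \<mu>"
        using measurable_cong_sets[OF mu_sets refl] hm by (metis borel_measurable_abs measurable_compose_rev measurable_ennreal)
      have "(\<integral>\<^sup>+x. ennreal \<bar>h m x\<bar> \<partial>density \<mu> (\<lambda>x. ennreal \<bar>D x\<bar>))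
          = (\<integral>\<^sup>+x. ennreal (\<bar>h m x\<bar> * \<bar>D x\<bar>) \<partial>\<mu>)"
        by (simp add: nn_integral_density[OF Dm hmu] ennreal_mult' mult.commute)
      also have "\<dots> \<le> ennreal r" by (rule bound[OF m])
      finally show "(\<integral>\<^sup>+x. ennreal \<bar>h m x\<bar> \<partial>density \<mu> (\<lambda>x. ennreal \<bar>D x\<bar>)) \<le> ennreal r" .
    qed
  qed
  have part3: "\<forall>\<epsilon>>0. \<exists>R. \<forall>m\<ge>1. measure \<mu> {x. \<bar>h m x\<bar> > R} \<le> \<epsilon>"
  proof (intro allI impI)
    fix \<epsilon> :: real assume ep: "\<epsilon> > 0"
    define S where "S n = {x. \<bar>D x\<bar> < 1 / (real n + 1)}" for n :: nat
    have Ss: "S n \<in> sets \<mu>" for n unfolding S_def mu_sets by measurable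
    have dec: "decseq S"
      unfolding decseq_def S_def
    proof (intro allI impI subsetI)
      fix i j :: nat and x assume ij: "i \<le> j" and x: "x \<in> {x. \<bar>D x\<bar> < 1 / (real j + 1)}"
      have "1 / (real j + 1) \<le> 1 / (real i + 1)" using ij by (intro divide_left_mono) auto
      thus "x \<in> {x. \<bar>D x\<bar> < 1 / (real i + 1)}" using x by auto
    qed
    have Int: "(\<Inter>n. S n) = {x. D x = 0}"
    proof (intro equalityI subsetI)
      fix x assume x: "x \<in> (\<Inter>n. S n)"
      show "x \<in> {x. D x = 0}"
      proof (rule ccontr)
        assume "x \<notin> {x. D x = 0}"
        hence pos: "\<bar>D x\<bar> > 0" by simp
        obtain n :: nat where n: "inverse (real (Suc n)) < \<bar>D x\<bar>" using reals_Archimedean[OF pos] by blast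
        have "x \<in> S n" using x by auto
        thus False using n by (simp add: S_def inverse_eq_divide add.commute)
      qed
    qed (auto simp: S_def)
    have Z: "{x. D x = 0} \<in> null_sets \<mu>"
    proof -
      have Zs: "{x. D x = 0} \<in> sets \<mu>" unfolding mu_sets by measurable
      have "AE x in \<mu>. x \<notin> {x. D x = 0}" using drift
        by eventually_elim (auto simp: D_def; smt (verit))
      thus ?thesis using AE_iff_null_sets[OF Zs] by simp
    qed
    have "(\<lambda>n. measure \<mu> (S n)) \<longlonglongrightarrow> measure \<mu> (\<Inter>n. S n)"
      by (rule mu.finite_Lim_measure_decseq) (use Ss dec in auto)
    hence "(\<lambda>n. measure \<mu> (S n)) \<longlonglongrightarrow> 0" using Z Int by (simp add: measure_def null_setsD1)
    hence "eventually (\<lambda>n. measure \<mu> (S n) < \<epsilon> / 2) sequentially"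
      using ep by (intro order_tendstoD(2)) auto
    then obtain n where n: "measure \<mu> (S n) < \<epsilon> / 2" by (auto simp: eventually_sequentially)
    define \<delta> where "\<delta> = 1 / (real n + 1)"
    have dp: "\<delta> > 0" by (simp add: \<delta>_def)
    define R where "R = 2 * r / (\<delta> * \<epsilon>) + 1"
    have Rp: "R > 0"
    proof -
      have "2 * r / (\<delta> * \<epsilon>) \<ge> 0" using r0 dp ep by simp
      thus ?thesis by (simp add: R_def)
    qed
    show "\<exists>R. \<forall>m\<ge>1. measure \<mu> {x. \<bar>h m x\<bar> > R} \<le> \<epsilon>"
    proof (intro exI[of _ R] allI impI)
      fix m :: nat assume m: "m \<ge> 1"
      have hm[measurable]: "h m \<in> borel_measurable borel" using Lm_facts(1) h_max[OF m] by blast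
      define T where "T = {x. \<bar>D x\<bar> \<ge> \<delta> \<and> \<bar>h m x\<bar> > R}"
      have Ts: "T \<in> sets \<mu>" unfolding T_def mu_sets by measurable
      have Hs: "{x. \<bar>h m x\<bar> > R} \<in> sets \<mu>" unfolding mu_sets by measurable
      have sub: "{x. \<bar>h m x\<bar> > R} \<subseteq> S n \<union> T" by (auto simp: S_def T_def \<delta>_def)
      have "ennreal (R * \<delta>) * emeasure \<mu> T = (\<integral>\<^sup>+x. ennreal (R * \<delta>) * indicator T x \<partial>\<mu>)"
        using nn_integral_cmult_indicator[OF Ts, of "ennreal (R * \<delta>)"] by simp
      also have "\<dots> \<le> (\<integral>\<^sup>+x. ennreal (\<bar>h m x\<bar> * \<bar>D x\<bar>) \<partial>\<mu>)"
      proof (rule nn_integral_mono)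
        fix x
        show "ennreal (R * \<delta>) * indicator T x \<le> ennreal (\<bar>h m x\<bar> * \<bar>D x\<bar>)"
        proof (cases "x \<in> T")
          case True
          hence "R * \<delta> \<le> \<bar>h m x\<bar> * \<bar>D x\<bar>" using Rp dp by (intro mult_mono) (auto simp: T_def)
          thus ?thesis using True by (simp add: ennreal_leI)
        qed simp
      qed
      also have "\<dots> \<le> ennreal r" by (rule bound[OF m])
      finally have "ennreal (R * \<delta> * measure \<mu> T) \<le> ennreal r"
        using Rp dp by (simp add: mu.emeasure_eq_measure ennreal_mult')
      hence "R * \<delta> * measure \<mu> T \<le> r" using r0 by simp
      hence mT: "measure \<mu> T \<le> r / (R * \<delta>)" using Rp dp by (simp add: field_simps)
      have "r / (R * \<delta>) \<le> \<epsilon> / 2"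
      proof -
        have "r \<le> \<epsilon> / 2 * (R * \<delta>)" using dp ep r0 by (simp add: R_def field_simps)
        thus ?thesis using Rp dp by (simp add: field_simps)
      qed
      have "measure \<mu> {x. \<bar>h m x\<bar> > R} \<le> measure \<mu> (S n \<union> T)"
        using sub Ss Ts by (intro mu.finite_measure_mono) auto
      also have "\<dots> \<le> measure \<mu> (S n) + measure \<mu> T" using Ss Ts by (rule measure_Un_le)
      finally show "measure \<mu> {x. \<bar>h m x\<bar> > R} \<le> \<epsilon>"
        using n mT \<open>r / (R * \<delta>) \<le> \<epsilon> / 2\<close> by linarith
    qed
  qed
  show ?thesis using part1 part2 part3 by (intro exI[of _ 1]) auto
qed

end
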